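(* Let $h>0$ and $0\le \alpha<1/4$. In the planar setting described in the context, let $g\in G$ be any target point. Then there exist two camera locations $s_p,s_q\in S$ such that $$\varepsilon(g,\{s_p,s_q\})\;\le\;\sqrt{\frac{1+2\alpha}{1-4\alpha}}\;\varepsilon(g,S).$$
   Context: Work in $\mathbb{R}^2$ with coordinates $(x,z)$. The ground line is $G=\{z=0\}$ and the viewing line is $S=\{z=h\}$, $h>0$. Fix an error bound $\alpha>0$ (radians). For a point $s$ and a unit vector $u$, the wedge $W(s,u)=\{s+rv:\ r\ge 0,\ |v|=1,\ \angle(v,u)\le\alpha\}$; it has apex $s$ and opening angle $2\alpha$. For a target $g$ and a camera location $s$, let $\mathcal W(g,s)$ be the set of all wedges $W(s,u)$, over all unit vectors $u$, that contain $g$. For a set $C\subseteq S$ of camera locations, the worst-case uncertainty is $$\varepsilon(g,C)=\sup\Big\{\operatorname{diam}\Big(\bigcap_{s\in C}W_s\Big):\ W_s\in\mathcal W(g,s)\ \text{for every } s\in C\Big\},$$ i.e. one wedge is chosen per camera so as to jointly maximize the diameter of the intersection. $\varepsilon(g,S)$ is the worst-case uncertainty obtained using all points of $S$ as cameras. *)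

theory Defs
  imports "HOL-Analysis.Analysis"
begin

type_synonym pt = "real \<times> real"

definition vec_angle :: "pt \<Rightarrow> pt \<Rightarrow> real" where
  "vec_angle v u = arccos ((v \<bullet> u) / (norm v * norm u))"

definition ground :: "pt set" where
  "ground = {p. snd p = 0}"

definition viewline :: "real \<Rightarrow> pt set" where
  "viewline h = {p. snd p = h}"

text \<open>The wedge W(s,u) with apex s, axis u and half-opening angle alpha.\<close>
definition wedge :: "real \<Rightarrow> pt \<Rightarrow> pt \<Rightarrow> pt set" where
  "wedge \<alpha> s u = {s + r *\<^sub>R v | r v. r \<ge> 0 \<and> norm v = 1 \<and> vec_angle v u \<le> \<alpha>}"

definition wedges_through :: "real \<Rightarrow> pt \<Rightarrow> pt \<Rightarrow> pt set set" where
  "wedges_through \<alpha> g s = {wedge \<alpha> s u | u. norm u = 1 \<and> g \<in> wedge \<alpha> s u}"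

text \<open>Diameter as an extended real (infinite for unbounded sets).\<close>
definition ediam :: "pt set \<Rightarrow> ereal" where
  "ediam A = (SUP p\<in>A \<times> A. ereal (dist (fst p) (snd p)))"

definition uncertainty :: "real \<Rightarrow> pt \<Rightarrow> pt set \<Rightarrow> ereal" where
  "uncertainty \<alpha> g C =
     (SUP W\<in>{W :: pt \<Rightarrow> pt set. \<forall>s\<in>C. W s \<in> wedges_through \<alpha> g s}.
        ediam (\<Inter>s\<in>C. W s))"

end

theory Submission imports Defs begin

lemma cone_alg:
  fixes cc ss U1 U2 V1 V2 :: real
  assumes cc: "cc > 0" and ss: "ss \<ge> 0" and cs: "cc^2 + ss^2 = 1" and sc: "ss^2 < cc^2"
    and U: "U1^2 + U2^2 = 1" and V: "V1^2 + V2^2 = 1" and U1: "U1 \<ge> cc"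
    and p: "V1 * U1 + V2 * U2 \<ge> cc"
  shows "V1 \<ge> 0"
    and "(U2 * cc - U1 * ss)/(U1 * cc+U2 * ss)  *  V1 \<le> V2"
    and "V2 \<le> (U2 * cc+U1 * ss)/(U1 * cc-U2 * ss)  *  V1"
    and "(U2 * cc - U1 * ss)/(U1 * cc+U2 * ss) \<le> 0"
    and "0 \<le> (U2 * cc+U1 * ss)/(U1 * cc-U2 * ss)"
    and "(U2 * cc+U1 * ss)/(U1 * cc-U2 * ss) - (U2 * cc - U1 * ss)/(U1 * cc+U2 * ss) \<le> 2 * cc * ss/(cc^2-ss^2)"
proof -
  have "U2^2 \<le> ss^2" using U U1 cc cs by (smt (verit) power_mono)
  hence aU2: "\<bar>U2\<bar> \<le> ss" using ss by (metis power2_abs power2_le_imp_le)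
  have u2a: "U2 \<le> ss" and u2b: "-U2 \<le> ss" using aU2 by auto
  define pp where "pp = V1 * U1 + V2 * U2"
  define q where "q = U1 * V2 - U2 * V1"
  have "pp^2 + q^2 = (U1^2+U2^2)*(V1^2+V2^2)" unfolding pp_def q_def
    by (simp add: power2_eq_square algebra_simps)
  hence pq: "pp^2 + q^2 = 1" using U V by simp
  have pc: "pp \<ge> cc" using p pp_def by simp
  have "q^2 \<le> ss^2" using pq pc cc cs by (smt (verit) power_mono)
  hence aq: "\<bar>q\<bar> \<le> ss" using ss by (metis power2_abs power2_le_imp_le)
  have "pp * U1 - q * U2 = V1*(U1^2+U2^2)" unfolding pp_def q_def
    by (simp add: power2_eq_square algebra_simps)
  hence V1e: "V1 = pp * U1 - q * U2" using U by simp
  have "pp * U2 + q * U1 = V2*(U1^2+U2^2)" unfolding pp_def q_def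
    by (simp add: power2_eq_square algebra_simps)
  hence V2e: "V2 = pp * U2 + q * U1" using U by simp
  have "pp * U1 \<ge> cc * cc" using pc U1 cc by (meson less_le mult_mono order_trans)
  moreover have "q * U2 \<le> ss * ss" using aq aU2 ss
    by (smt (verit) abs_mult abs_le_iff mult_mono abs_ge_zero)
  ultimately have V1pos: "V1 \<ge> cc * cc - ss * ss" using V1e by linarith
  have css: "cc * cc - ss * ss > 0" using sc by (simp add: power2_eq_square)
  show "V1 \<ge> 0" using V1pos css by linarith
  have Dm: "U1 * cc - U2 * ss \<ge> cc * cc - ss * ss"
  proof -
    have "U1 * cc \<ge> cc * cc" using U1 cc by (simp add: mult_right_mono)
    moreover have "U2 * ss \<le> ss * ss" using mult_right_mono[OF u2a, of ss] mult_right_mono[OF u2b, of ss] ss by linarith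
    ultimately show ?thesis by linarith
  qed
  have Dp: "U1 * cc + U2 * ss \<ge> cc * cc - ss * ss"
  proof -
    have "U1 * cc \<ge> cc * cc" using U1 cc by (simp add: mult_right_mono)
    moreover have "-U2 * ss \<le> ss * ss" using mult_right_mono[OF u2a, of ss] mult_right_mono[OF u2b, of ss] ss by linarith
    ultimately show ?thesis by linarith
  qed
  have sp: "ss * pp \<ge> ss * cc" using pc ss by (simp add: mult_left_mono)
  have cq1: "cc * q \<le> cc * ss" using aq cc by (simp add: mult_left_mono)
  have cq2: "-(cc * q) \<le> cc * ss" using aq cc by (smt (verit) abs_le_iff mult_left_mono mult_minus_right)
  have k1: "(U2 * cc+U1 * ss) * V1 - V2 * (U1 * cc - U2 * ss) = ss * pp - cc * q"
    unfolding pp_def q_def by (simp add: algebra_simps)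
  have k2: "V2 * (U1 * cc + U2 * ss) - (U2 * cc - U1 * ss) * V1 = ss * pp + cc * q"
    unfolding pp_def q_def by (simp add: algebra_simps)
  have Dmp: "U1 * cc - U2 * ss > 0" using Dm css by linarith
  have Dpp: "U1 * cc + U2 * ss > 0" using Dp css by linarith
  show "V2 \<le> (U2 * cc+U1 * ss)/(U1 * cc-U2 * ss)  *  V1"
    using k1 sp cq1 Dmp by (simp add: field_simps)
  show "(U2 * cc - U1 * ss)/(U1 * cc+U2 * ss)  *  V1 \<le> V2"
    using k2 sp cq2 Dpp by (simp add: field_simps)
  have "U2 * cc \<le> U1 * ss"
  proof -
    have "U2 * cc \<le> ss * cc" using mult_right_mono[OF u2a, of cc] mult_right_mono[OF u2b, of cc] cc by linarith
    moreover have "ss * cc \<le> U1 * ss" using mult_right_mono[OF U1 ss] by (simp add: mult.commute)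
    ultimately show ?thesis by linarith
  qed
  thus "(U2 * cc - U1 * ss)/(U1 * cc+U2 * ss) \<le> 0" using Dpp divide_nonpos_pos[of "U2 * cc - U1 * ss" "U1 * cc+U2 * ss"] by linarith
  have "-(U2 * cc) \<le> U1 * ss"
  proof -
    have "-(U2 * cc) \<le> ss * cc" using mult_right_mono[OF u2a, of cc] mult_right_mono[OF u2b, of cc] cc by linarith
    moreover have "ss * cc \<le> U1 * ss" using mult_right_mono[OF U1 ss] by (simp add: mult.commute)
    ultimately show ?thesis by linarith
  qed
  thus "0 \<le> (U2 * cc+U1 * ss)/(U1 * cc-U2 * ss)" using Dmp divide_nonneg_pos[of "U2 * cc+U1 * ss" "U1 * cc-U2 * ss"] by linarith
  have num: "(U2 * cc+U1 * ss) * (U1 * cc+U2 * ss) - (U2 * cc - U1 * ss) * (U1 * cc-U2 * ss) = 2 * cc * ss"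
  proof -
    have "(U2 * cc+U1 * ss) * (U1 * cc+U2 * ss) - (U2 * cc - U1 * ss) * (U1 * cc-U2 * ss) = 2 * cc * ss * (U1^2+U2^2)"
      by (simp add: power2_eq_square algebra_simps)
    thus ?thesis using U by simp
  qed
  have den: "(U1 * cc-U2 * ss) * (U1 * cc+U2 * ss) \<ge> cc^2 - ss^2"
  proof -
    have "(U1 * cc-U2 * ss) * (U1 * cc+U2 * ss) = U1^2 * cc^2 - U2^2 * ss^2" by (simp add: algebra_simps power2_eq_square)
    moreover have "U1^2 \<ge> cc^2" using U1 cc by (simp add: power_mono)
    moreover have "U2^2 \<le> ss^2" by fact
    ultimately have "(U1 * cc-U2 * ss) * (U1 * cc+U2 * ss) \<ge> cc^2 * cc^2 - ss^2 * ss^2"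
      using mult_right_mono[of "cc^2" "U1^2" "cc^2"] mult_right_mono[of "U2^2" "ss^2" "ss^2"] by simp
    also have "cc^2 * cc^2 - ss^2 * ss^2 = (cc^2+ss^2) * (cc^2-ss^2)" by (simp add: algebra_simps)
    finally show ?thesis using cs by simp
  qed
  have "(U2 * cc+U1 * ss)/(U1 * cc-U2 * ss) - (U2 * cc - U1 * ss)/(U1 * cc+U2 * ss)
      = 2 * cc * ss / ((U1 * cc-U2 * ss) * (U1 * cc+U2 * ss))"
    using Dmp Dpp num by (simp add: field_simps)
  also have "\<dots> \<le> 2 * cc * ss/(cc^2-ss^2)"
    using den sc cc ss by (intro divide_left_mono) auto
  finally show "(U2 * cc+U1 * ss)/(U1 * cc-U2 * ss) - (U2 * cc - U1 * ss)/(U1 * cc+U2 * ss) \<le> 2 * cc * ss/(cc^2-ss^2)" .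
qed

definition rot :: "pt \<Rightarrow> pt" where "rot p = (- snd p, fst p)"

lemma norm_pt: "norm (p::pt) = sqrt ((fst p)^2 + (snd p)^2)"
  by (cases p) (simp add: norm_Pair)

lemma norm1_pt: "norm (p::pt) = 1 \<longleftrightarrow> (fst p)^2 + (snd p)^2 = 1"
  by (simp add: norm_pt)

lemma angle_iff:
  assumes "norm v = 1" "norm u = 1" "0 \<le> \<alpha>" "\<alpha> \<le> pi"
  shows "vec_angle v u \<le> \<alpha> \<longleftrightarrow> cos \<alpha> \<le> v \<bullet> u"
proof -
  have b: "\<bar>v \<bullet> u\<bar> \<le> 1" using Cauchy_Schwarz_ineq2[of v u] assms by simp
  have va: "vec_angle v u = arccos (v \<bullet> u)" using assms by (simp add: vec_angle_def)
  show ?thesis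
  proof
    assume "vec_angle v u \<le> \<alpha>"
    hence "arccos (v \<bullet> u) \<le> \<alpha>" using va by simp
    hence "cos \<alpha> \<le> cos (arccos (v \<bullet> u))"
      using assms arccos_lbound[of "v \<bullet> u"] b by (intro cos_monotone_0_pi_le) auto
    thus "cos \<alpha> \<le> v \<bullet> u" using b by (simp add: cos_arccos_abs)
  next
    assume "cos \<alpha> \<le> v \<bullet> u"
    hence "arccos (v \<bullet> u) \<le> arccos (cos \<alpha>)" using b by (intro arccos_le_arccos) auto
    thus "vec_angle v u \<le> \<alpha>" using va assms arccos_cos by simp
  qed
qed

lemma wedge_mem: "x \<in> wedge \<alpha> s u \<longleftrightarrow>
   (\<exists>r v. x = s + r *\<^sub>R v \<and> r \<ge> 0 \<and> norm v = 1 \<and> vec_angle v u \<le> \<alpha>)"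
  unfolding wedge_def by blast

lemma trig_basics:
  assumes "0 \<le> \<alpha>" "\<alpha> < 1/4"
  shows "cos \<alpha> > 0" "sin \<alpha> \<ge> 0" "(cos \<alpha>)^2 + (sin \<alpha>)^2 = 1"
    "(sin \<alpha>)^2 < (cos \<alpha>)^2" "\<alpha> \<le> pi"
proof -
  have pi: "pi > 3" using pi_gt3 .
  show "cos \<alpha> > 0" using assms pi by (intro cos_gt_zero_pi) auto
  show "sin \<alpha> \<ge> 0" using assms pi by (intro sin_ge_zero) auto
  show "(cos \<alpha>)^2 + (sin \<alpha>)^2 = 1" by simp
  show "\<alpha> \<le> pi" using assms pi by simp
  have "sin \<alpha> \<le> \<alpha>" using sin_x_le_x[OF assms(1)] .
  hence "(sin \<alpha>)^2 \<le> \<alpha>^2" using \<open>sin \<alpha> \<ge> 0\<close> by (simp add: power_mono)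
  also have "\<dots> < 1/2" using mult_left_mono[of \<alpha> "1/4" \<alpha>] assms by (simp add: power2_eq_square)
  finally have "(sin \<alpha>)^2 < 1/2" .
  thus "(sin \<alpha>)^2 < (cos \<alpha>)^2" using sin_cos_squared_add[of \<alpha>] by linarith
qed

lemma wedge_cone:
  assumes u: "norm u = 1" and g: "g \<in> wedge \<alpha> s u" and gs: "g \<noteq> s"
    and a0: "0 \<le> \<alpha>" and a1: "\<alpha> < 1/4"
  shows "\<exists>a b. a \<le> 0 \<and> 0 \<le> b \<and>
     b - a \<le> 2 * cos \<alpha> * sin \<alpha> / ((cos \<alpha>)^2 - (sin \<alpha>)^2) \<and>
     (\<forall>x\<in>wedge \<alpha> s u. 0 \<le> (x - s) \<bullet> (g - s) \<and>
        a * ((x - s) \<bullet> (g - s)) \<le> (x - s) \<bullet> rot (g - s) \<and>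
        (x - s) \<bullet> rot (g - s) \<le> b * ((x - s) \<bullet> (g - s)))"
proof -
  note tb = trig_basics[OF a0 a1]
  obtain \<rho> w where gw: "g = s + \<rho> *\<^sub>R w" "\<rho> \<ge> 0" "norm w = 1" "vec_angle w u \<le> \<alpha>"
    using g wedge_mem by blast
  have wu: "cos \<alpha> \<le> w \<bullet> u" using gw angle_iff u a0 tb by blast
  obtain w1 w2 where w: "w = (w1,w2)" by (cases w)
  obtain u1 u2 where uu: "u = (u1,u2)" by (cases u)
  have w12: "w1^2 + w2^2 = 1" using gw(3) w norm1_pt by simp
  have u12: "u1^2 + u2^2 = 1" using u uu norm1_pt by simp
  define U1 where "U1 = u1*w1 + u2*w2"
  define U2 where "U2 = - u1*w2 + u2*w1"
  have "U1^2 + U2^2 = (u1^2+u2^2)*(w1^2+w2^2)" unfolding U1_def U2_def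
    by (simp add: power2_eq_square algebra_simps)
  hence U: "U1^2 + U2^2 = 1" using u12 w12 by simp
  have U1c: "U1 \<ge> cos \<alpha>" using wu w uu U1_def by (simp add: mult.commute)
  define a where "a = (U2 * cos \<alpha> - U1 * sin \<alpha>)/(U1 * cos \<alpha> + U2 * sin \<alpha>)"
  define b where "b = (U2 * cos \<alpha> + U1 * sin \<alpha>)/(U1 * cos \<alpha> - U2 * sin \<alpha>)"
  have gs2: "g - s = \<rho> *\<^sub>R w" using gw by simp
  show ?thesis
  proof (intro exI conjI ballI)
    fix x assume x: "x \<in> wedge \<alpha> s u"
    obtain r v where xv: "x = s + r *\<^sub>R v" "r \<ge> 0" "norm v = 1" "vec_angle v u \<le> \<alpha>"
      using x wedge_mem by blast
    have vu: "cos \<alpha> \<le> v \<bullet> u" using xv angle_iff u a0 tb by blast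
    obtain v1 v2 where v: "v = (v1,v2)" by (cases v)
    have v12: "v1^2 + v2^2 = 1" using xv(3) v norm1_pt by simp
    define V1 where "V1 = v1*w1 + v2*w2"
    define V2 where "V2 = - v1*w2 + v2*w1"
    have "V1^2 + V2^2 = (v1^2+v2^2)*(w1^2+w2^2)" unfolding V1_def V2_def
      by (simp add: power2_eq_square algebra_simps)
    hence V: "V1^2 + V2^2 = 1" using v12 w12 by simp
    have "V1*U1 + V2*U2 = (v1*u1+v2*u2)*(w1^2+w2^2)" unfolding V1_def V2_def U1_def U2_def
      by (simp add: power2_eq_square algebra_simps)
    hence VU: "V1*U1 + V2*U2 \<ge> cos \<alpha>" using vu v uu w12 by simp
    note ca = cone_alg[OF tb(1) tb(2) tb(3) tb(4) U V U1c VU]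
    have e1: "(x - s) \<bullet> (g - s) = (r*\<rho>) * V1"
      using xv(1) gs2 v w unfolding V1_def by (simp add: algebra_simps)
    have e2: "(x - s) \<bullet> rot (g - s) = (r*\<rho>) * V2"
      using xv(1) gs2 v w unfolding V2_def by (simp add: algebra_simps rot_def)
    have rp: "r*\<rho> \<ge> 0" using xv gw by simp
    show "0 \<le> (x - s) \<bullet> (g - s)" using e1 rp ca(1) by simp
    show "a * ((x - s) \<bullet> (g - s)) \<le> (x - s) \<bullet> rot (g - s)"
      using e1 e2 mult_left_mono[OF ca(2) rp] unfolding a_def by (simp add: algebra_simps)
    show "(x - s) \<bullet> rot (g - s) \<le> b * ((x - s) \<bullet> (g - s))"
      using e1 e2 mult_left_mono[OF ca(3) rp] unfolding b_def by (simp add: algebra_simps)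
  next
    have "U1*U1 + U2*U2 \<ge> cos \<alpha>" using U cos_le_one[of \<alpha>] by (simp add: power2_eq_square)
    note ca = cone_alg[OF tb(1) tb(2) tb(3) tb(4) U U U1c this]
    show "a \<le> 0" using ca(4) a_def by simp
    show "0 \<le> b" using ca(5) b_def by simp
    show "b - a \<le> 2 * cos \<alpha> * sin \<alpha> / ((cos \<alpha>)^2 - (sin \<alpha>)^2)" using ca(6) a_def b_def by simp
  qed
qed

lemma bisect:
  fixes d1 d2 s :: pt
  assumes d1: "d1 \<noteq> 0" and d2: "d2 \<noteq> 0" and a0: "0 \<le> \<alpha>" and a1: "\<alpha> < 1/4"
    and k: "d1 \<bullet> d2 \<ge> (2*(cos \<alpha>)^2 - 1) * (norm d1 * norm d2)"
  shows "\<exists>u. norm u = 1 \<and> s + d1 \<in> wedge \<alpha> s u \<and> s + d2 \<in> wedge \<alpha> s u"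
proof -
  note tb = trig_basics[OF a0 a1]
  define c where "c = cos \<alpha>"
  have c0: "c > 0" using tb c_def by simp
  define n1 where "n1 = (1/norm d1) *\<^sub>R d1"
  define n2 where "n2 = (1/norm d2) *\<^sub>R d2"
  have nn1: "norm n1 = 1" using d1 n1_def by simp
  have nn2: "norm n2 = 1" using d2 n2_def by simp
  define kk where "kk = n1 \<bullet> n2"
  have kk: "kk \<ge> 2*c^2 - 1"
  proof -
    have "kk = (d1 \<bullet> d2) / (norm d1 * norm d2)" using kk_def n1_def n2_def by simp
    moreover have "norm d1 * norm d2 > 0" using d1 d2 by simp
    ultimately show ?thesis using k c_def by (simp add: pos_le_divide_eq)
  qed
  define m where "m = norm (n1 + n2)"
  have i1: "n1 \<bullet> n1 = 1" using nn1 power2_norm_eq_inner[of n1] by simp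
  have i2: "n2 \<bullet> n2 = 1" using nn2 power2_norm_eq_inner[of n2] by simp
  have m2: "m^2 = 2 + 2*kk"
    unfolding m_def kk_def power2_norm_eq_inner
    using i1 i2 by (simp add: inner_add_left inner_add_right inner_commute)
  have "m^2 \<ge> (2*c)^2" using m2 kk by (simp add: power2_eq_square)
  hence m2c: "m \<ge> 2*c" by (rule power2_le_imp_le) (simp add: m_def)
  have mpos: "m > 0" using m2c c0 by linarith
  define u where "u = (1/m) *\<^sub>R (n1 + n2)"
  have nu: "norm u = 1" using mpos u_def m_def by simp
  have "n1 \<bullet> u = (1 + kk)/m" using i1 unfolding u_def kk_def
    by (simp add: inner_add_right)
  also have "\<dots> = m/2" using m2 mpos by (simp add: field_simps power2_eq_square)
  finally have n1u: "n1 \<bullet> u \<ge> c" using m2c by simp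
  have "n2 \<bullet> u = (1 + kk)/m" using i2 unfolding u_def kk_def
    by (simp add: inner_add_right inner_commute[of n2 n1])
  also have "\<dots> = m/2" using m2 mpos by (simp add: field_simps power2_eq_square)
  finally have n2u: "n2 \<bullet> u \<ge> c" using m2c by simp
  have w1: "s + d1 \<in> wedge \<alpha> s u"
    unfolding wedge_mem
    apply (rule exI[of _ "norm d1"], rule exI[of _ n1])
    using nn1 nu n1u angle_iff[OF nn1 nu a0 tb(5)] c_def d1 n1_def by simp
  have w2: "s + d2 \<in> wedge \<alpha> s u"
    unfolding wedge_mem
    apply (rule exI[of _ "norm d2"], rule exI[of _ n2])
    using nn2 nu n2u angle_iff[OF nn2 nu a0 tb(5)] c_def d2 n2_def by simp
  show ?thesis using nu w1 w2 by blast
qed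

lemma coord_bound:
  fixes h T xi eta :: real
  assumes h: "h > 0" and T0: "0 \<le> T" and T1: "T < 1"
    and A1: "0 \<le> 2*h + xi" and A2: "0 \<le> 2*h + eta"
    and b1: "xi \<le> T * (2*h + eta)" and b2: "eta \<le> T * (2*h + xi)"
  shows "eta \<le> 2*h*T/(1-T)"
proof -
  have "T * xi \<le> T * (T * (2*h + eta))" using b1 T0 by (rule mult_left_mono)
  hence "eta \<le> 2*h*T + T*(T*(2*h+eta))" using b2 by (simp add: algebra_simps)
  hence "eta * (1-T) * (1+T) \<le> 2*h*T*(1+T)" by (simp add: algebra_simps power2_eq_square)
  hence "eta * (1-T) \<le> 2*h*T" using T0 by (simp add: mult.assoc mult_le_cancel_right_pos mult.commute[of _ "1+T"]) 
  thus ?thesis using T1 by (simp add: pos_le_divide_eq)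
qed

lemma diff_bound:
  fixes h T a b M Ax Ay xix xiy :: real
  assumes a: "a \<le> 0" and b: "0 \<le> b" and ab: "b - a \<le> T"
    and Ax: "0 \<le> Ax" "Ax \<le> M" and Ay: "0 \<le> Ay" "Ay \<le> M"
    and x1: "a * Ax \<le> xix" "xix \<le> b * Ax" and y1: "a * Ay \<le> xiy" "xiy \<le> b * Ay"
  shows "\<bar>xix - xiy\<bar> \<le> T * M"
proof -
  have M0: "M \<ge> 0" using Ax by linarith
  have "b * Ax \<le> b * M" using b Ax by (simp add: mult_left_mono)
  moreover have "- (a * Ay) \<le> - (a * M)" using a Ay by (simp add: mult_left_mono_neg)
  moreover have "b * Ay \<le> b * M" using b Ay by (simp add: mult_left_mono)
  moreover have "- (a * Ax) \<le> - (a * M)" using a Ax by (simp add: mult_left_mono_neg)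
  moreover have "(b - a) * M \<le> T * M" using ab M0 by (rule mult_right_mono)
  ultimately show ?thesis using x1 y1 by (simp add: algebra_simps abs_le_iff)
qed

lemma upper_alg:
  fixes h T ap bp aq bq xix etax xiy etay :: real
  assumes h: "h > 0" and T0: "0 \<le> T" and T1: "T < 1"
    and ap: "ap \<le> 0" "0 \<le> bp" "bp - ap \<le> T"
    and aq: "aq \<le> 0" "0 \<le> bq" "bq - aq \<le> T"
    and px: "0 \<le> 2*h + xix" "ap * (2*h + xix) \<le> - etax" "- etax \<le> bp * (2*h + xix)"
    and qx: "0 \<le> 2*h + etax" "aq * (2*h + etax) \<le> xix" "xix \<le> bq * (2*h + etax)"
    and py: "0 \<le> 2*h + xiy" "ap * (2*h + xiy) \<le> - etay" "- etay \<le> bp * (2*h + xiy)"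
    and qy: "0 \<le> 2*h + etay" "aq * (2*h + etay) \<le> xiy" "xiy \<le> bq * (2*h + etay)"
  shows "(xix - xiy)^2 + (etax - etay)^2 \<le> 2 * (2*h*T/(1-T))^2"
proof -
  have abs1: "\<bar>xi\<bar> \<le> T * A" if "a \<le> 0" "0 \<le> b" "b - a \<le> T" "0 \<le> A" "a * A \<le> xi" "xi \<le> b * A"
    for a b A xi :: real
  proof -
    have "b * A \<le> T * A" using that by (intro mult_right_mono) auto
    moreover have "-(a * A) \<le> T * A" using that mult_right_mono[of "-a" T A] by auto
    ultimately show ?thesis using that by (simp add: abs_le_iff)
  qed
  have bx1: "xix \<le> T * (2*h + etax)" using abs1[OF aq qx] by simp
  have bx2: "etax \<le> T * (2*h + xix)" using abs1[OF ap px] by simp 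
  have by1: "xiy \<le> T * (2*h + etay)" using abs1[OF aq qy] by simp
  have by2: "etay \<le> T * (2*h + xiy)" using abs1[OF ap py] by simp
  have ex: "etax \<le> 2*h*T/(1-T)" using coord_bound[OF h T0 T1 px(1) qx(1) bx1 bx2] .
  have ey: "etay \<le> 2*h*T/(1-T)" using coord_bound[OF h T0 T1 py(1) qy(1) by1 by2] .
  have xx: "xix \<le> 2*h*T/(1-T)" using coord_bound[OF h T0 T1 qx(1) px(1) bx2 bx1] .
  have xy: "xiy \<le> 2*h*T/(1-T)" using coord_bound[OF h T0 T1 qy(1) py(1) by2 by1] .
  define M where "M = 2*h/(1-T)"
  have eM: "2*h + 2*h*T/(1-T) = M" unfolding M_def using T1 by (simp add: field_simps)
  have d1: "\<bar>xix - xiy\<bar> \<le> T * M"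
  proof -
    have "2*h + etax \<le> M" "2*h + etay \<le> M" using ex ey eM by linarith+
    thus ?thesis using diff_bound[OF aq qx(1) _ qy(1) _ qx(2,3) qy(2,3)] by blast
  qed
  have d2: "\<bar>(- etax) - (- etay)\<bar> \<le> T * M"
  proof -
    have "2*h + xix \<le> M" "2*h + xiy \<le> M" using xx xy eM by linarith+
    thus ?thesis using diff_bound[OF ap px(1) _ py(1) _ px(2,3) py(2,3)] by blast
  qed
  have "(xix - xiy)^2 \<le> (T*M)^2" using power_mono[OF d1 abs_ge_zero, of 2] by simp
  moreover have "(etax - etay)^2 \<le> (T*M)^2" using power_mono[OF d2 abs_ge_zero, of 2] by (simp add: power2_commute)
  moreover have "T*M = 2*h*T/(1-T)" unfolding M_def by simp
  ultimately show ?thesis by simp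
qed

lemma key_ineq:
  fixes h T X :: real
  assumes h: "h > 0" and T0: "0 \<le> T"
  shows "\<bar>X\<bar> * (2*h*T*(1+T)) \<le> T * (X^2 + h*(h + 2*h*T*(1+T)))"
proof (cases "T = 0")
  case True thus ?thesis by simp
next
  case False
  hence Tp: "T > 0" using T0 by simp
  define t where "t = 2*h*T*(1+T)"
  have "4*T*(T * (X^2 + h*(h + t)) - \<bar>X\<bar>*t) = (2*T*\<bar>X\<bar> - t)^2 + (4*T^2*h*(h+t) - t^2)"
    by (simp add: algebra_simps power2_eq_square)
  moreover have "4*T^2*h*(h+t) - t^2 = 4*h^2*T^4"
    unfolding t_def by (simp add: algebra_simps power2_eq_square power4_eq_xxxx)
  ultimately have "4*T*(T * (X^2 + h*(h + t)) - \<bar>X\<bar>*t) \<ge> 0" by simp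
  hence "T * (X^2 + h*(h + t)) - \<bar>X\<bar>*t \<ge> 0" using Tp by (simp add: zero_le_mult_iff)
  thus ?thesis unfolding t_def by simp
qed

definition Tq :: "real \<Rightarrow> real" where
  "Tq \<alpha> = 2 * cos \<alpha> * sin \<alpha> / ((cos \<alpha>)^2 - (sin \<alpha>)^2)"

lemma numeric:
  assumes a0: "0 \<le> \<alpha>" and a1: "\<alpha> < 1/4"
  shows "0 \<le> Tq \<alpha>" "Tq \<alpha> < 1"
    "1 \<le> sqrt ((1 + 2*\<alpha>) / (1 - 4*\<alpha>)) * (1 - (Tq \<alpha>)^2)"
proof -
  note tb = trig_basics[OF a0 a1]
  define c where "c = cos \<alpha>"
  define s where "s = sin \<alpha>"
  have c0: "c > 0" and s0: "s \<ge> 0" and cs: "c^2 + s^2 = 1" using tb c_def s_def by auto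
  have sa: "s \<le> \<alpha>" using sin_x_le_x[OF a0] s_def by simp
  have c1: "c \<le> 1" using c_def by simp
  have "s^2 \<le> \<alpha>^2" using sa s0 by (simp add: power_mono)
  moreover have "\<alpha>^2 \<le> 1/16" using a0 a1 power_mono[of \<alpha> "1/4" 2] by (simp add: power2_eq_square)
  ultimately have C: "c^2 - s^2 \<ge> 7/8" using cs by linarith
  have num0: "0 \<le> 2*c* s" using c0 s0 by simp
  have "2*c* s \<le> 2*\<alpha>" using mult_mono[OF c1 sa] c0 s0 by linarith
  have Tdef: "Tq \<alpha> = 2*c* s/(c^2-s^2)" using Tq_def c_def s_def by simp
  show T0: "0 \<le> Tq \<alpha>" using Tdef num0 C by simp
  have "2*c* s/(c^2-s^2) \<le> 2*\<alpha>/(7/8)"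
    using \<open>2*c* s \<le> 2*\<alpha>\<close> num0 C by (intro frac_le) auto
  hence Tb: "Tq \<alpha> \<le> 16*\<alpha>/7" using Tdef by simp
  thus T1: "Tq \<alpha> < 1" using a1 by simp
  define T where "T = Tq \<alpha>"
  have T2: "T^2 \<le> (16*\<alpha>/7)^2" using Tb T0 T_def by (simp add: power_mono)
  have pa: "\<alpha> * (1 + 2*\<alpha>) \<le> 3/8"
  proof -
    have "\<alpha> * (1+2*\<alpha>) \<le> (1/4)*(1+2*(1/4))" using a0 a1 by (intro mult_mono) auto
    thus ?thesis by simp
  qed
  have "(1+2*\<alpha>)*(1-2*T^2) \<ge> 1 - 4*\<alpha>"
  proof -
    have "(1+2*\<alpha>)*(1-2*T^2) \<ge> (1+2*\<alpha>)*(1-2*(16*\<alpha>/7)^2)"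
      using T2 a0 by (intro mult_left_mono) auto
    moreover have "(1+2*\<alpha>)*(1-2*(16*\<alpha>/7)^2) - (1 - 4*\<alpha>) = \<alpha> * (6 - (512/49) * (\<alpha> * (1 + 2*\<alpha>)))"
      by (simp add: algebra_simps power2_eq_square)
    moreover have "\<alpha> * (6 - (512/49) * (\<alpha> * (1 + 2*\<alpha>))) \<ge> 0" using pa a0 by simp
    ultimately show ?thesis by linarith
  qed
  moreover have "(1-T^2)^2 \<ge> 1 - 2*T^2" proof - have "(1-T^2)^2 = 1 - 2*T^2 + (T^2)^2" by (simp add: power2_eq_square algebra_simps) thus ?thesis by simp qed
  ultimately have "(1+2*\<alpha>)*(1-T^2)^2 \<ge> 1 - 4*\<alpha>"
    using mult_left_mono[of "1-2*T^2" "(1-T^2)^2" "1+2*\<alpha>"] a0 by linarith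
  hence F: "(1 + 2*\<alpha>) / (1 - 4*\<alpha>) * (1-T^2)^2 \<ge> 1" using a1 by (simp add: field_simps)
  have "T^2 < 1" using T0 T1 T_def by (simp add: power_less_one_iff abs_less_iff)
  hence "1 - T^2 \<ge> 0" by simp
  hence "sqrt ((1-T^2)^2) = 1 - T^2" by simp
  hence "sqrt ((1 + 2*\<alpha>) / (1 - 4*\<alpha>)) * (1 - T^2) = sqrt ((1 + 2*\<alpha>) / (1 - 4*\<alpha>) * (1-T^2)^2)"
    by (simp only: real_sqrt_mult)
  also have "\<dots> \<ge> 1" using F by simp
  finally show "1 \<le> sqrt ((1 + 2*\<alpha>) / (1 - 4*\<alpha>)) * (1 - (Tq \<alpha>)^2)" using T_def by simp
qed

lemma camera:
  assumes h: "h > 0" and a0: "0 \<le> \<alpha>" and a1: "\<alpha> < 1/4" and sv: "s \<in> viewline h"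
  shows "\<exists>u. norm u = 1 \<and> (gx, 0) \<in> wedge \<alpha> s u \<and>
           (gx, - (2*h*Tq \<alpha>*(1 + Tq \<alpha>))) \<in> wedge \<alpha> s u"
proof -
  note tb = trig_basics[OF a0 a1]
  define c where "c = cos \<alpha>"
  define ss where "ss = sin \<alpha>"
  have c0: "c > 0" and s0: "ss \<ge> 0" and cs: "c^2 + ss^2 = 1" and sc: "ss^2 < c^2"
    using tb c_def ss_def by auto
  define T where "T = Tq \<alpha>"
  have T0: "T \<ge> 0" using numeric(1)[OF a0 a1] T_def by simp
  define t where "t = 2*h*T*(1+T)"
  have t0: "t \<ge> 0" using t_def T0 h by simp
  obtain x0 where s: "s = (x0, h)" using sv unfolding viewline_def by (cases s) auto
  define Y where "Y = gx - x0"
  define d1 where "d1 = (Y, -h)"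
  define d2 where "d2 = (Y, -h - t)"
  have e1: "s + d1 = (gx, 0)" using s d1_def Y_def by simp
  have e2: "s + d2 = (gx, - (2*h*Tq \<alpha>*(1 + Tq \<alpha>)))" using s d2_def Y_def t_def T_def by simp
  have d1n: "d1 \<noteq> 0" using d1_def h by (simp add: zero_prod_def)
  have d2n: "d2 \<noteq> 0" using d2_def h t0 by (simp add: zero_prod_def)
  define P where "P = Y^2 + h*(h+t)"
  have P0: "P \<ge> 0" using P_def h t0 by simp
  have dd: "d1 \<bullet> d2 = P" using d1_def d2_def P_def by (simp add: algebra_simps power2_eq_square)
  have nd: "norm d1 * norm d2 = sqrt (P^2 + Y^2*t^2)"
  proof -
    have n1: "norm d1 = sqrt (Y^2 + h^2)" using d1_def by (simp add: norm_Pair)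
    have "norm d2 = sqrt (Y^2 + (-h-t)^2)" using d2_def by (simp add: norm_Pair)
    moreover have "(-h-t)^2 = (h+t)^2" by (simp add: power2_eq_square algebra_simps)
    ultimately have n2: "norm d2 = sqrt (Y^2 + (h+t)^2)" by simp
    have "norm d1 * norm d2 = sqrt ((Y^2 + h^2) * (Y^2 + (h+t)^2))"
      unfolding n1 n2 by (simp add: real_sqrt_mult)
    also have "(Y^2 + h^2) * (Y^2 + (h+t)^2) = P^2 + Y^2*t^2"
      unfolding P_def by (simp add: algebra_simps power2_eq_square)
    finally show ?thesis .
  qed
  define C where "C = c^2 - ss^2"
  have C0: "C > 0" using sc C_def by simp
  have Td: "T = 2*c* ss/C" using T_def Tq_def c_def ss_def C_def by simp
  have ki: "\<bar>Y\<bar> * t \<le> T * P" using key_ineq[OF h T0, of Y] t_def P_def by simp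
  have "C * (\<bar>Y\<bar> * t) \<le> C * (T * P)" using ki C0 by simp
  also have "C * (T * P) = 2*c* ss*P" using Td C0 by simp
  finally have k2: "C * (\<bar>Y\<bar> * t) \<le> 2*c* ss*P" .
  have "(C * (\<bar>Y\<bar> * t))^2 \<le> (2*c* ss*P)^2"
    using k2 C0 t0 by (intro power_mono) auto
  moreover have "(2*c* ss)^2 + C^2 = 1"
  proof -
    have "(2*c* ss)^2 + C^2 = (c^2+ss^2)^2" unfolding C_def by (simp add: algebra_simps power2_eq_square)
    thus ?thesis using cs by simp
  qed
  ultimately have le: "(C * (\<bar>Y\<bar> * t))^2 \<le> (2*c* ss*P)^2" and idC: "(2*c* ss)^2 = 1 - C^2" by linarith+
  have A: "(C * (\<bar>Y\<bar> * t))^2 = C^2 * (Y^2 * t^2)" by (simp add: power_mult_distrib power2_abs)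
  have "(2*c* ss*P)^2 = (2*c* ss)^2 * P^2" by (rule power_mult_distrib)
  hence B: "(2*c* ss*P)^2 = (1 - C^2) * P^2" using idC by simp
  have "C^2 * (Y^2 * t^2) \<le> (1 - C^2) * P^2" using le A B by simp
  hence "C^2 * (Y^2 * t^2) \<le> P^2 - C^2 * P^2" by (simp add: left_diff_distrib)
  hence sq: "C^2 * (P^2 + Y^2*t^2) \<le> P^2" by (simp add: distrib_left)
  have "C * sqrt (P^2 + Y^2*t^2) = sqrt (C^2 * (P^2 + Y^2*t^2))"
    using C0 by (simp add: real_sqrt_mult)
  also have "\<dots> \<le> sqrt (P^2)" using sq by (rule real_sqrt_le_mono)
  also have "\<dots> = P" using P0 by simp
  finally have fin: "C * sqrt (P^2 + Y^2*t^2) \<le> P" .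
  have "2*(cos \<alpha>)^2 - 1 = C" unfolding C_def c_def ss_def using sin_cos_squared_add[of \<alpha>] by linarith
  hence main: "d1 \<bullet> d2 \<ge> (2*(cos \<alpha>)^2 - 1) * (norm d1 * norm d2)"
    using fin dd nd by simp
  obtain u where "norm u = 1" "s + d1 \<in> wedge \<alpha> s u" "s + d2 \<in> wedge \<alpha> s u"
    using bisect[OF d1n d2n a0 a1 main] by blast
  thus ?thesis using e1 e2 by metis
qed

lemma from_cone:
  fixes h A B a b :: real
  assumes h: "h > 0" and "0 \<le> h*A" "a*(h*A) \<le> h*B" "h*B \<le> b*(h*A)"
  shows "0 \<le> A" "a*A \<le> B" "B \<le> b*A"
proof -
  show "0 \<le> A" using assms by (simp add: zero_le_mult_iff)
  have "h*(a*A) \<le> h*B" using assms by (simp add: algebra_simps)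
  thus "a*A \<le> B" using h by simp
  have "h*B \<le> h*(b*A)" using assms by (simp add: algebra_simps)
  thus "B \<le> b*A" using h by simp
qed

lemma upper_bound:
  assumes h: "h > 0" and a0: "0 \<le> \<alpha>" and a1: "\<alpha> < 1/4"
  shows "uncertainty \<alpha> (gx, 0) {(gx - h, h), (gx + h, h)}
           \<le> ereal (2*h*Tq \<alpha>/(1 - Tq \<alpha>))"
proof -
  define g where "g = (gx, 0::real)"
  define sp where "sp = (gx - h, h)"
  define sq where "sq = (gx + h, h)"
  define T where "T = Tq \<alpha>"
  have T0: "0 \<le> T" and T1: "T < 1" using numeric[OF a0 a1] T_def by auto
  show ?thesis
    unfolding uncertainty_def
  proof (rule SUP_least)
    fix W assume "W \<in> {W. \<forall>s\<in>{(gx - h, h), (gx + h, h)}. W s \<in> wedges_through \<alpha> (gx, 0) s}"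
    hence Wp: "W sp \<in> wedges_through \<alpha> g sp" and Wq: "W sq \<in> wedges_through \<alpha> g sq"
      unfolding sp_def sq_def g_def by auto
    obtain up where up: "W sp = wedge \<alpha> sp up" "norm up = 1" "g \<in> wedge \<alpha> sp up"
      using Wp unfolding wedges_through_def by blast
    obtain uq where uq: "W sq = wedge \<alpha> sq uq" "norm uq = 1" "g \<in> wedge \<alpha> sq uq"
      using Wq unfolding wedges_through_def by blast
    have gp: "g \<noteq> sp" using h g_def sp_def by simp
    have gq: "g \<noteq> sq" using h g_def sq_def by simp
    obtain ap bp where cp: "ap \<le> 0" "0 \<le> bp" "bp - ap \<le> T"
      "\<forall>x\<in>wedge \<alpha> sp up. 0 \<le> (x - sp) \<bullet> (g - sp) \<and>
        ap * ((x - sp) \<bullet> (g - sp)) \<le> (x - sp) \<bullet> rot (g - sp) \<and>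
        (x - sp) \<bullet> rot (g - sp) \<le> bp * ((x - sp) \<bullet> (g - sp))"
      using wedge_cone[OF up(2) up(3) gp a0 a1] T_def Tq_def by auto
    obtain aq bq where cq: "aq \<le> 0" "0 \<le> bq" "bq - aq \<le> T"
      "\<forall>x\<in>wedge \<alpha> sq uq. 0 \<le> (x - sq) \<bullet> (g - sq) \<and>
        aq * ((x - sq) \<bullet> (g - sq)) \<le> (x - sq) \<bullet> rot (g - sq) \<and>
        (x - sq) \<bullet> rot (g - sq) \<le> bq * ((x - sq) \<bullet> (g - sq))"
      using wedge_cone[OF uq(2) uq(3) gq a0 a1] T_def Tq_def by auto
    have pt: "0 \<le> 2*h + (fst x - gx - snd x) \<and> ap * (2*h + (fst x - gx - snd x)) \<le> - (-(fst x - gx) - snd x)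
        \<and> - (-(fst x - gx) - snd x) \<le> bp * (2*h + (fst x - gx - snd x))
      \<and> 0 \<le> 2*h + (-(fst x - gx) - snd x) \<and> aq * (2*h + (-(fst x - gx) - snd x)) \<le> (fst x - gx - snd x)
        \<and> (fst x - gx - snd x) \<le> bq * (2*h + (-(fst x - gx) - snd x))"
      if x: "x \<in> W sp \<inter> W sq" for x
    proof -
      obtain x1 x2 where xx: "x = (x1, x2)" by (cases x)
      have xp: "x \<in> wedge \<alpha> sp up" and xq: "x \<in> wedge \<alpha> sq uq" using x up uq by auto
      have e1: "(x - sp) \<bullet> (g - sp) = h * (2*h + (fst x - gx - snd x))"
        using xx sp_def g_def by (simp add: algebra_simps)
      have e2: "(x - sp) \<bullet> rot (g - sp) = h * (- (-(fst x - gx) - snd x))"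
        using xx sp_def g_def by (simp add: algebra_simps rot_def)
      have e3: "(x - sq) \<bullet> (g - sq) = h * (2*h + (-(fst x - gx) - snd x))"
        using xx sq_def g_def by (simp add: algebra_simps)
      have e4: "(x - sq) \<bullet> rot (g - sq) = h * (fst x - gx - snd x)"
        using xx sq_def g_def by (simp add: algebra_simps rot_def)
      have P: "0 \<le> h * (2*h + (fst x - gx - snd x))"
          "ap * (h * (2*h + (fst x - gx - snd x))) \<le> h * (- (-(fst x - gx) - snd x))"
          "h * (- (-(fst x - gx) - snd x)) \<le> bp * (h * (2*h + (fst x - gx - snd x)))"
        using cp(4) xp e1 e2 by auto
      have Q: "0 \<le> h * (2*h + (-(fst x - gx) - snd x))"
          "aq * (h * (2*h + (-(fst x - gx) - snd x))) \<le> h * (fst x - gx - snd x)"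
          "h * (fst x - gx - snd x) \<le> bq * (h * (2*h + (-(fst x - gx) - snd x)))"
        using cq(4) xq e3 e4 by auto
      show ?thesis using from_cone[OF h P] from_cone[OF h Q] by blast
    qed
    show "ediam (\<Inter>s\<in>{(gx - h, h), (gx + h, h)}. W s) \<le> ereal (2 * h * Tq \<alpha> / (1 - Tq \<alpha>))"
      unfolding ediam_def
    proof (rule SUP_least)
      fix pq assume pq: "pq \<in> (\<Inter>s\<in>{(gx - h, h), (gx + h, h)}. W s) \<times> (\<Inter>s\<in>{(gx - h, h), (gx + h, h)}. W s)"
      obtain x y where xy: "pq = (x, y)" by (cases pq)
      have x: "x \<in> W sp \<inter> W sq" and y: "y \<in> W sp \<inter> W sq" using pq xy sp_def sq_def by auto
      note px = pt[OF x] and py = pt[OF y]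
      have ua: "((fst x - gx - snd x) - (fst y - gx - snd y))^2 + ((-(fst x - gx) - snd x) - (-(fst y - gx) - snd y))^2
          \<le> 2 * (2*h*T/(1-T))^2"
        using upper_alg[OF h T0 T1 cp(1-3) cq(1-3)] px py by blast
      have "((fst x - gx - snd x) - (fst y - gx - snd y))^2 + ((-(fst x - gx) - snd x) - (-(fst y - gx) - snd y))^2
          = 2 * ((fst x - fst y)^2 + (snd x - snd y)^2)"
        by (simp add: power2_eq_square algebra_simps)
      hence le: "(fst x - fst y)^2 + (snd x - snd y)^2 \<le> (2*h*T/(1-T))^2" using ua by simp
      have U0: "0 \<le> 2*h*T/(1-T)" using T0 T1 h by simp
      have "dist x y = sqrt ((fst x - fst y)^2 + (snd x - snd y)^2)"
        by (cases x, cases y) (simp add: dist_Pair_Pair dist_real_def)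
      also have "\<dots> \<le> sqrt ((2*h*T/(1-T))^2)" using le by (rule real_sqrt_le_mono)
      also have "\<dots> = 2*h*T/(1-T)" by (simp only: real_sqrt_abs abs_of_nonneg[OF U0])
      finally show "ereal (dist (fst pq) (snd pq)) \<le> ereal (2 * h * Tq \<alpha> / (1 - Tq \<alpha>))"
        using xy T_def by simp
    qed
  qed
qed

lemma lower_bound:
  assumes h: "h > 0" and a0: "0 \<le> \<alpha>" and a1: "\<alpha> < 1/4"
  shows "ereal (2*h*Tq \<alpha>*(1 + Tq \<alpha>)) \<le> uncertainty \<alpha> (gx, 0) (viewline h)"
proof -
  define L where "L = 2*h*Tq \<alpha>*(1 + Tq \<alpha>)"
  have L0: "L \<ge> 0" using numeric[OF a0 a1] h L_def by simp
  define P where "P = (\<lambda>s u. norm u = 1 \<and> (gx, 0) \<in> wedge \<alpha> s u \<and> (gx, - L) \<in> wedge \<alpha> s u)"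
  define uf where "uf = (\<lambda>s. SOME u. P s u)"
  define Wf where "Wf = (\<lambda>s. wedge \<alpha> s (uf s))"
  have Pu: "P s (uf s)" if "s \<in> viewline h" for s
  proof -
    have "\<exists>u. P s u" using camera[OF h a0 a1 that, of gx] P_def L_def by simp
    thus ?thesis unfolding uf_def by (rule someI_ex)
  qed
  have mem: "Wf \<in> {W. \<forall>s\<in>viewline h. W s \<in> wedges_through \<alpha> (gx, 0) s}"
    using Pu unfolding Wf_def wedges_through_def P_def by blast
  have g1: "(gx, 0) \<in> (\<Inter>s\<in>viewline h. Wf s)" using Pu unfolding Wf_def P_def by blast
  have g2: "(gx, -L) \<in> (\<Inter>s\<in>viewline h. Wf s)" using Pu unfolding Wf_def P_def by blast
  have "ereal L = ereal (dist (fst ((gx,0),(gx,-L))) (snd ((gx, 0::real),(gx,-L))))"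
    using L0 by (simp add: dist_Pair_Pair dist_real_def)
  also have "\<dots> \<le> ediam (\<Inter>s\<in>viewline h. Wf s)"
    unfolding ediam_def using g1 g2 by (intro SUP_upper) auto
  also have "\<dots> \<le> uncertainty \<alpha> (gx, 0) (viewline h)"
    unfolding uncertainty_def using mem by (rule SUP_upper)
  finally show ?thesis using L_def by simp
qed

theorem theorem1:
  fixes h \<alpha> :: real and g :: pt
  assumes "h > 0" and "0 \<le> \<alpha>" and "\<alpha> < 1/4" and "g \<in> ground"
  shows "\<exists>sp\<in>viewline h. \<exists>sq\<in>viewline h. sp \<noteq> sq \<and>
           uncertainty \<alpha> g {sp, sq}
             \<le> ereal (sqrt ((1 + 2*\<alpha>) / (1 - 4*\<alpha>))) * uncertainty \<alpha> g (viewline h)"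
proof -
  obtain gx where g: "g = (gx, 0)" using assms(4) unfolding ground_def by (cases g) auto
  define T where "T = Tq \<alpha>"
  define F where "F = (1 + 2*\<alpha>) / (1 - 4*\<alpha>)"
  have T0: "0 \<le> T" and T1: "T < 1" and nF: "1 \<le> sqrt F * (1 - T^2)"
    using numeric[OF assms(2,3)] T_def F_def by auto
  have F0: "0 \<le> F" unfolding F_def using assms(2,3) by (intro divide_nonneg_pos) auto
  define U where "U = 2*h*T/(1-T)"
  define L where "L = 2*h*T*(1+T)"
  have U0: "U \<ge> 0" using T0 T1 assms(1) U_def by simp
  have UL: "U * (1 - T^2) = L" unfolding U_def L_def using T1
    by (simp add: field_simps power2_eq_square)
  have "U = U * 1" by simp
  also have "\<dots> \<le> U * (sqrt F * (1 - T^2))" using nF U0 by (rule mult_left_mono)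
  also have "\<dots> = sqrt F * L" by (simp only: UL[symmetric] mult_ac)
  finally have ULF: "U \<le> sqrt F * L" .
  show ?thesis
  proof (intro bexI conjI)
    show "(gx - h, h) \<noteq> (gx + h, h)" using assms(1) by simp
    show "(gx - h, h) \<in> viewline h" "(gx + h, h) \<in> viewline h" by (auto simp: viewline_def)
    have "uncertainty \<alpha> g {(gx - h, h), (gx + h, h)} \<le> ereal U"
      using upper_bound[OF assms(1-3), of gx] g U_def T_def by simp
    also have "\<dots> \<le> ereal (sqrt F) * ereal L" using ULF by simp
    also have "\<dots> \<le> ereal (sqrt F) * uncertainty \<alpha> g (viewline h)"
      using lower_bound[OF assms(1-3), of gx] g L_def T_def F0 by (intro ereal_mult_left_mono) auto
    finally show "uncertainty \<alpha> g {(gx - h, h), (gx + h, h)}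
        \<le> ereal (sqrt ((1 + 2*\<alpha>) / (1 - 4*\<alpha>))) * uncertainty \<alpha> g (viewline h)" using F_def by simp
  qed
qed

end
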